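(* Let $N$ be a network (an unrooted, binary, level-1, semi-directed phylogenetic network, as defined in the context) with at least four leaves. Then $N$ contains an out leaf or a tree cherry.
   Context: A network is a finite connected graph with no self-loops or multiple edges, whose degree-1 vertices are the leaves (labelled by a leaf set $X$) and whose other vertices all have degree 3 (binary). Some edges are directed: a reticulation vertex is a vertex with exactly two incoming directed edges (its reticulation edges) and one further incident edge (its out edge), which is left undirected; the only directed edges are reticulation edges (semi-directed). The network is phylogenetic: there is a valid root location, i.e. an edge that can be subdivided by a new root vertex $\rho$ so that orienting every undirected edge away from $\rho$ gives an orientation consistent with the given directions of all reticulation edges (so every non-root vertex has in-degree 1 and out-degree 2, except reticulation vertices, which have in-degree 2 and out-degree 1). The network is level-1: every biconnected component contains at most one reticulation vertex. An out leaf is a leaf incident to the out edge of a reticulation vertex. A tree cherry is a subgraph consisting of a vertex $v$ and two leaves adjacent to $v$, which is separated from the rest of the network by deleting a cut edge incident to $v$ (a cut edge is an edge whose removal disconnects the graph). *)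

theory Defs
  imports Main
begin

text \<open>A network is given by a vertex set V, an (undirected) edge set E of
  2-element vertex sets, and a set A of directed (reticulation) edges; every
  element of A is an orientation of an edge of E.  Undirected edges are the
  edges of E not oriented by A.\<close>

definition adj :: "'a set set \<Rightarrow> ('a \<times> 'a) set" where
  "adj E = {(u, v). {u, v} \<in> E}"

definition simple_graph :: "'a set \<Rightarrow> 'a set set \<Rightarrow> bool" where
  "simple_graph V E \<longleftrightarrow> finite V \<and> (\<forall>e\<in>E. e \<subseteq> V \<and> card e = 2)"

definition graph_connected :: "'a set \<Rightarrow> 'a set set \<Rightarrow> bool" where
  "graph_connected V E \<longleftrightarrow> (\<forall>u\<in>V. \<forall>v\<in>V. (u, v) \<in> (adj E)\<^sup>*)"

definition deg :: "'a set set \<Rightarrow> 'a \<Rightarrow> nat" where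
  "deg E v = card {e \<in> E. v \<in> e}"

definition leaves :: "'a set \<Rightarrow> 'a set set \<Rightarrow> 'a set" where
  "leaves V E = {v \<in> V. deg E v = 1}"

definition indeg :: "('a \<times> 'a) set \<Rightarrow> 'a \<Rightarrow> nat" where
  "indeg D v = card {u. (u, v) \<in> D}"

definition is_retic :: "('a \<times> 'a) set \<Rightarrow> 'a \<Rightarrow> bool" where
  "is_retic A v \<longleftrightarrow> indeg A v = 2"

definition semi_directed :: "'a set set \<Rightarrow> ('a \<times> 'a) set \<Rightarrow> bool" where
  "semi_directed E A \<longleftrightarrow>
     A \<subseteq> adj E \<and> (\<forall>(u, v)\<in>A. (v, u) \<notin> A) \<and>
     (\<forall>(u, v)\<in>A. is_retic A v \<and> (\<forall>w. (v, w) \<notin> A))"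

text \<open>Valid root location e0: subdividing e0 by a root and orienting every
  undirected edge away from the root yields a rooted (acyclic) network,
  consistent with A, in which reticulations have in-degree 2 and all other
  non-root vertices in-degree 1.  The orientation of the edges other than e0
  is D; the two root arcs contribute in-degree 1 to the endpoints of e0.\<close>
definition valid_root_location ::
  "'a set \<Rightarrow> 'a set set \<Rightarrow> ('a \<times> 'a) set \<Rightarrow> 'a set \<Rightarrow> bool" where
  "valid_root_location V E A e0 \<longleftrightarrow> e0 \<in> E \<and>
     (\<exists>D. D \<subseteq> adj (E - {e0}) \<and>
          (\<forall>e\<in>E - {e0}. \<exists>u v. e = {u, v} \<and> (u, v) \<in> D) \<and>
          acyclic D \<and> A \<subseteq> D \<and>
          (\<forall>v\<in>V. indeg D v + (if v \<in> e0 then 1 else 0)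
                   = (if is_retic A v then 2 else 1)))"

definition phylogenetic :: "'a set \<Rightarrow> 'a set set \<Rightarrow> ('a \<times> 'a) set \<Rightarrow> bool" where
  "phylogenetic V E A \<longleftrightarrow> (\<exists>e0. valid_root_location V E A e0)"

text \<open>Biconnected components (blocks): classes of edges, two edges being in
  the same block iff they are equal or lie on a common simple cycle.\<close>
definition is_cycle :: "'a set set \<Rightarrow> 'a list \<Rightarrow> bool" where
  "is_cycle E cs \<longleftrightarrow> length cs \<ge> 3 \<and> distinct cs \<and>
     (\<forall>i < length cs. {cs ! i, cs ! ((i + 1) mod length cs)} \<in> E)"

definition cycle_edges :: "'a list \<Rightarrow> 'a set set" where
  "cycle_edges cs = {{cs ! i, cs ! ((i + 1) mod length cs)} | i. i < length cs}"

definition same_block :: "'a set set \<Rightarrow> 'a set \<Rightarrow> 'a set \<Rightarrow> bool" where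
  "same_block E e f \<longleftrightarrow> e = f \<or>
     (\<exists>cs. is_cycle E cs \<and> e \<in> cycle_edges cs \<and> f \<in> cycle_edges cs)"

definition block_vertices :: "'a set set \<Rightarrow> 'a set \<Rightarrow> 'a set" where
  "block_vertices E e = \<Union> {f \<in> E. same_block E e f}"

definition level1 :: "'a set set \<Rightarrow> ('a \<times> 'a) set \<Rightarrow> bool" where
  "level1 E A \<longleftrightarrow> (\<forall>e\<in>E. card {v \<in> block_vertices E e. is_retic A v} \<le> 1)"

definition network :: "'a set \<Rightarrow> 'a set set \<Rightarrow> ('a \<times> 'a) set \<Rightarrow> bool" where
  "network V E A \<longleftrightarrow> simple_graph V E \<and> graph_connected V E \<and>
     (\<forall>v\<in>V. deg E v = 1 \<or> deg E v = 3) \<and>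
     semi_directed E A \<and> phylogenetic V E A \<and> level1 E A"

definition out_leaf :: "'a set \<Rightarrow> 'a set set \<Rightarrow> ('a \<times> 'a) set \<Rightarrow> 'a \<Rightarrow> bool" where
  "out_leaf V E A x \<longleftrightarrow> x \<in> leaves V E \<and>
     (\<exists>v. is_retic A v \<and> {v, x} \<in> E \<and> (x, v) \<notin> A \<and> (v, x) \<notin> A)"

definition cut_edge :: "'a set \<Rightarrow> 'a set set \<Rightarrow> 'a set \<Rightarrow> bool" where
  "cut_edge V E e \<longleftrightarrow> e \<in> E \<and> \<not> graph_connected V (E - {e})"

definition tree_cherry ::
  "'a set \<Rightarrow> 'a set set \<Rightarrow> 'a \<Rightarrow> 'a \<Rightarrow> 'a \<Rightarrow> bool" where
  "tree_cherry V E v x y \<longleftrightarrow> v \<in> V \<and> x \<noteq> y \<and>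
     x \<in> leaves V E \<and> y \<in> leaves V E \<and> {v, x} \<in> E \<and> {v, y} \<in> E \<and>
     (\<exists>w. w \<notin> {x, y} \<and> cut_edge V E {v, w} \<and>
          {u \<in> V. (v, u) \<in> (adj (E - {{v, w}}))\<^sup>*} = {v, x, y})"

end

theory Submission
  imports Defs
begin

lemma deg_nbrs:
  assumes "\<forall>e\<in>E. card e = 2"
  shows "deg E v = card {u. {v,u} \<in> E}"
proof -
  have "bij_betw (\<lambda>u. {v,u}) {u. {v,u} \<in> E} {e\<in>E. v\<in>e}"
  proof (rule bij_betwI')
    show "\<And>x y. x \<in> {u. {v, u} \<in> E} \<Longrightarrow> y \<in> {u. {v, u} \<in> E} \<Longrightarrow> ({v, x} = {v, y}) = (x = y)"
      by (auto simp: doubleton_eq_iff)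
    show "\<And>x. x \<in> {u. {v, u} \<in> E} \<Longrightarrow> {v, x} \<in> {e \<in> E. v \<in> e}" by auto
    fix e assume "e \<in> {e \<in> E. v \<in> e}"
    then have "e \<in> E" "v \<in> e" by auto
    then obtain a b where "e = {a,b}" "a \<noteq> b" using assms card_2_iff by metis
    then show "\<exists>x\<in>{u. {v, u} \<in> E}. e = {v, x}" using \<open>e \<in> E\<close> \<open>v \<in> e\<close>
      by (metis insert_commute insert_iff mem_Collect_eq singletonD)
  qed
  from bij_betw_same_card[OF this] show ?thesis unfolding deg_def by simp
qed

theorem lemma1:
  fixes V :: "'a set" and E :: "'a set set" and A :: "('a \<times> 'a) set"
  assumes "network V E A"
    and "card (leaves V E) \<ge> 4"
  shows "(\<exists>x. out_leaf V E A x) \<or> (\<exists>v x y. tree_cherry V E v x y)"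
proof -
  from assms(1) have sg: "simple_graph V E" and degs: "\<forall>v\<in>V. deg E v = 1 \<or> deg E v = 3"
    and sd: "semi_directed E A" and ph: "phylogenetic V E A" unfolding network_def by auto
  from ph obtain e0 where vr: "valid_root_location V E A e0" unfolding phylogenetic_def by blast
  then have e0E: "e0 \<in> E" unfolding valid_root_location_def by blast
  from vr obtain D where Dsub: "D \<subseteq> adj (E - {e0})"
    and Dor: "\<forall>e\<in>E-{e0}. \<exists>u v. e={u,v} \<and> (u,v)\<in>D" and acyc: "acyclic D" and AD: "A \<subseteq> D"
    and ind: "\<forall>v\<in>V. indeg D v + (if v\<in>e0 then 1 else 0) = (if is_retic A v then 2 else 1)"
    unfolding valid_root_location_def by (elim conjE exE) (rule that)
  have finV: "finite V" and Ecard: "\<forall>e\<in>E. e \<subseteq> V \<and> card e = 2" using sg simple_graph_def by auto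
  have EV: "a\<in>V \<and> b\<in>V" if "{a,b}\<in>E" for a b using Ecard that by auto
  have ab: "a \<noteq> b" if "{a,b}\<in>E" for a b using Ecard that by fastforce
  have Dedge: "{a,b}\<in>E \<and> {a,b}\<noteq>e0" if "(a,b)\<in>D" for a b using Dsub that unfolding adj_def by auto
  have Dirr: "(b,a)\<notin>D" if "(a,b)\<in>D" for a b
    using acyc that unfolding acyclic_def by (meson r_into_trancl' trancl_into_trancl)
  define N where "N v = {u. {v,u}\<in>E}" for v
  define Inn where "Inn v = {u. (u,v)\<in>D}" for v
  define Out where "Out v = {u. (v,u)\<in>D}" for v
  define R where "R v = {u. {v,u} = e0}" for v
  have degN: "deg E v = card (N v)" for v unfolding N_def using Ecard by (intro deg_nbrs) auto
  obtain a0 b0 where e0ab: "e0 = {a0,b0}" "a0 \<noteq> b0" using Ecard e0E card_2_iff by metis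
  have cardR: "card (R v) = (if v\<in>e0 then 1 else 0)" for v
  proof -
    have "R v = (if v = a0 then {b0} else if v = b0 then {a0} else {})"
      unfolding R_def e0ab using e0ab(2) by (auto simp: doubleton_eq_iff)
    then show ?thesis using e0ab by auto
  qed
  have Nsplit: "N v = Inn v \<union> Out v \<union> R v" for v
  proof
    show "N v \<subseteq> Inn v \<union> Out v \<union> R v"
    proof
      fix u assume "u \<in> N v"
      then have uE: "{v,u} \<in> E" by (simp add: N_def)
      show "u \<in> Inn v \<union> Out v \<union> R v"
      proof (cases "{v,u} = e0")
        case True then show ?thesis by (simp add: R_def)
      next
        case False
        then obtain p q where "{v,u} = {p,q}" "(p,q)\<in>D" using Dor uE by blast
        then show ?thesis by (auto simp: Inn_def Out_def doubleton_eq_iff)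
      qed
    qed
    show "Inn v \<union> Out v \<union> R v \<subseteq> N v"
      using Dedge e0E by (auto simp: Inn_def Out_def R_def N_def) (metis insert_commute)
  qed
  have finN: "finite (N v)" for v
  proof (cases "v \<in> V")
    case True
    then have "N v \<subseteq> V" using EV N_def by auto
    then show ?thesis using finV finite_subset by blast
  next
    case False then have "N v = {}" using EV N_def by auto
    then show ?thesis by simp
  qed
  have cnt: "card (N v) = card (Inn v) + card (Out v) + card (R v)" for v
  proof -
    have f: "finite (Inn v)" "finite (Out v)" "finite (R v)" using finN Nsplit
      by (metis finite_Un)+
    have d1: "Inn v \<inter> Out v = {}" using Dirr by (auto simp: Inn_def Out_def)
    have d2: "(Inn v \<union> Out v) \<inter> R v = {}" using Dedge by (auto simp: Inn_def Out_def R_def insert_commute)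
    show ?thesis unfolding Nsplit using f d1 d2 by (simp add: card_Un_disjoint)
  qed
  have degf: "deg E v = (if is_retic A v then 2 else 1) + card (Out v)" if "v \<in> V" for v
    using ind that cnt degN cardR unfolding indeg_def Inn_def by auto
  have OutN: "Out v \<subseteq> N v" for v using Nsplit by blast
  have finOut: "finite (Out v)" for v using OutN finN finite_subset by blast
  have leafprop: "\<not> is_retic A x \<and> Out x = {}" if "x \<in> leaves V E" for x
  proof -
    have "x \<in> V" "deg E x = 1" using that by (auto simp: leaves_def)
    then have "1 = (if is_retic A x then 2 else 1) + card (Out x)" using degf by simp
    then show ?thesis using finOut[of x] by (auto split: if_splits)
  qed
  have NV: "N v \<subseteq> V" for v using EV N_def by auto
  have "card e0 = 2" using Ecard e0E by blast
  have "finite e0" using e0ab by simp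
  then have "card (leaves V E) - card e0 \<le> card (leaves V E - e0)" by (rule diff_card_le_card_Diff)
  then have "card (leaves V E - e0) > 0" using assms(2) \<open>card e0 = 2\<close> by linarith
  then obtain x where xl: "x \<in> leaves V E" and xe0: "x \<notin> e0" by (metis DiffE card_gt_0_iff ex_in_conv)
  have xV: "x \<in> V" using xl by (simp add: leaves_def)
  have "indeg D x = 1" using ind xV xe0 leafprop[OF xl] by auto
  then have "Inn x \<noteq> {}" unfolding indeg_def Inn_def by (metis card.empty zero_neq_one)
  then obtain u where ux: "(u,x) \<in> D" unfolding Inn_def by auto
  have uV: "u \<in> V" using Dedge[OF ux] EV by blast
  have "u \<notin> leaves V E" using leafprop ux Out_def by auto
  then have u3: "deg E u = 3" using degs uV by (auto simp: leaves_def)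
  define S where "S = {v\<in>V. deg E v = 3}"
  have "u \<in> S" using uV u3 S_def by simp
  have finD: "finite D"
  proof -
    have "D \<subseteq> V \<times> V" using Dedge EV by auto
    then show ?thesis using finV finite_subset by blast
  qed
  have wfD: "wf (D\<inverse>)" using finite_acyclic_wf[of "D\<inverse>"] finD acyc by simp
  obtain v where vS: "v \<in> S" and vmin: "\<And>z. (z,v) \<in> D\<inverse> \<Longrightarrow> z \<notin> S"
    using wfE_min[OF wfD \<open>u \<in> S\<close>] by blast
  have vV: "v \<in> V" and v3: "deg E v = 3" using vS S_def by auto
  have outleaf: "z \<in> leaves V E" if "z \<in> Out v" for z
  proof -
    have vz: "(v,z) \<in> D" using that Out_def by simp
    have zV: "z \<in> V" using Dedge[OF vz] EV by blast
    have "z \<notin> S" using vmin vz by simp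
    then show ?thesis using zV degs unfolding S_def leaves_def by auto
  qed
  have Nsym: "a \<in> N b" if "b \<in> N a" for a b using that N_def by (simp add: insert_commute)
  show ?thesis
  proof (cases "is_retic A v")
    case True
    then have "card (Out v) = 1" using degf[OF vV] v3 by simp
    then obtain x where Ox: "Out v = {x}" by (metis card_1_singleton_iff One_nat_def)
    have vx: "(v,x) \<in> D" using Ox Out_def by auto
    have xl: "x \<in> leaves V E" using outleaf Ox by simp
    have "(x,v) \<notin> A" using AD Dirr vx by blast
    moreover have "(v,x) \<notin> A"
    proof
      assume "(v,x) \<in> A"
      then have "is_retic A x" using sd unfolding semi_directed_def by blast
      then show False using leafprop[OF xl] by simp
    qed
    moreover have "{v,x} \<in> E" using Dedge[OF vx] by simp
    ultimately have "out_leaf V E A x" using xl True unfolding out_leaf_def by blast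
    then show ?thesis by blast
  next
    case False
    then have "card (Out v) = 2" using degf[OF vV] v3 by simp
    then obtain x y where Oxy: "Out v = {x,y}" and xy: "x \<noteq> y" using card_2_iff by metis
    have vx: "(v,x) \<in> D" and vy: "(v,y) \<in> D" using Oxy Out_def by auto
    have xl: "x \<in> leaves V E" and yl: "y \<in> leaves V E" using outleaf Oxy by auto
    have "card (Inn v) + card (R v) = 1" using ind vV False cardR unfolding indeg_def Inn_def by auto
    moreover have "Inn v \<inter> R v = {}" using Dedge by (auto simp: Inn_def R_def insert_commute)
    moreover have "finite (Inn v)" "finite (R v)" using finN Nsplit by (metis finite_Un)+
    ultimately have "card (Inn v \<union> R v) = 1" by (simp add: card_Un_disjoint)
    then obtain w where IRw: "Inn v \<union> R v = {w}" by (metis card_1_singleton_iff One_nat_def)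
    have Nv: "N v = {x,y,w}" using Nsplit[of v] Oxy IRw by auto
    have wxy: "w \<notin> {x,y}"
    proof -
      have "Out v \<inter> Inn v = {}" using Dirr by (auto simp: Inn_def Out_def)
      moreover have "Out v \<inter> R v = {}" using Dedge by (auto simp: Out_def R_def)
      ultimately show ?thesis using Oxy IRw by blast
    qed
    have vwE: "{v,w} \<in> E" using Nv N_def by auto
    have wV: "w \<in> V" using EV vwE by blast
    have wv: "w \<noteq> v" using ab vwE by blast
    have xE: "{v,x} \<in> E" and yE: "{v,y} \<in> E" using Dedge vx vy by auto
    have leafN: "N z = {v}" if "z \<in> leaves V E" "{v,z} \<in> E" for z
    proof -
      have "card (N z) = 1" using that degN by (simp add: leaves_def)
      moreover have "v \<in> N z" using that N_def by (simp add: insert_commute)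
      ultimately show ?thesis using card_1_singleton_iff by (metis One_nat_def singletonD)
    qed
    have Nx: "N x = {v}" using leafN xl xE by blast
    have Ny: "N y = {v}" using leafN yl yE by blast
    define E' where "E' = E - {{v,w}}"
    have clos: "u \<in> {v,x,y}" if "(v,u) \<in> (adj E')\<^sup>*" for u
      using that
    proof (induction rule: rtrancl_induct)
      case base
      then show ?case by simp
    next
      case (step a b)
      then have abE: "{a,b} \<in> E" "{a,b} \<noteq> {v,w}" unfolding adj_def E'_def by auto
      then have bN: "b \<in> N a" using N_def by simp
      show ?case
      proof -
        have "a = v \<or> a = x \<or> a = y" using step by simp
        then show ?thesis
        proof (elim disjE)
          assume "a = v" then show ?thesis using bN Nv abE by auto
        next
          assume "a = x" then show ?thesis using bN Nx by auto
        next
          assume "a = y" then show ?thesis using bN Ny by auto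
        qed
      qed
    qed
    have vxv: "x \<noteq> v" "y \<noteq> v" using ab xE yE by auto
    have rx: "(v,x) \<in> (adj E')\<^sup>*"
    proof -
      have "{v,x} \<noteq> {v,w}" using wxy vxv by (auto simp: doubleton_eq_iff)
      then have "(v,x) \<in> adj E'" using xE unfolding adj_def E'_def by simp
      then show ?thesis by simp
    qed
    have ry: "(v,y) \<in> (adj E')\<^sup>*"
    proof -
      have "{v,y} \<noteq> {v,w}" using wxy vxv by (auto simp: doubleton_eq_iff)
      then have "(v,y) \<in> adj E'" using yE unfolding adj_def E'_def by simp
      then show ?thesis by simp
    qed
    have xyV: "x \<in> V" "y \<in> V" using xl yl unfolding leaves_def by auto
    have comp: "{u \<in> V. (v, u) \<in> (adj E')\<^sup>*} = {v,x,y}"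
      using clos rx ry vV xyV by auto
    have "(v,w) \<notin> (adj E')\<^sup>*" using clos wxy wv by blast
    then have "\<not> graph_connected V E'" using vV wV unfolding graph_connected_def by blast
    then have "cut_edge V E {v,w}" using vwE E'_def unfolding cut_edge_def by simp
    then have "tree_cherry V E v x y"
      unfolding tree_cherry_def using vV xy xl yl xE yE wxy comp E'_def by blast
    then show ?thesis by blast
  qed
qed

end
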